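(* For all $n \ge 2$, $l(K_n \,\square\, K_2) \le 5n - 4$.
   Context: All graphs are simple and undirected; $K_n$ is the complete graph on $n$ vertices. Letters $x,y$ alternate in a word $w$ if deleting all other letters from $w$ yields $xyxy\ldots$ or $yxyx\ldots$ (of either parity). A word $w$ over $V(G)$ represents $G$ if every vertex occurs in $w$ and for all distinct $x,y$, $xy\in E(G)$ iff $x,y$ alternate in $w$; $l(G)$ is the minimum length of a word representing $G$. The Cartesian product $G\,\square\,H$ has vertex set $V(G)\times V(H)$, with $(u,v)$ adjacent to $(u',v')$ iff either $u=u'$ and $vv'\in E(H)$, or $v=v'$ and $uu'\in E(G)$. *)

theory Defs
  imports Main "HOL-Library.Extended_Nat"
begin

text \<open>A simple graph: a vertex set together with an (intended symmetric, irreflexive)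
  adjacency relation.\<close>
type_synonym 'a graph = "'a set \<times> ('a \<Rightarrow> 'a \<Rightarrow> bool)"

definition verts :: "'a graph \<Rightarrow> 'a set" where "verts G = fst G"
definition adj :: "'a graph \<Rightarrow> 'a \<Rightarrow> 'a \<Rightarrow> bool" where "adj G = snd G"

text \<open>Letters x, y alternate in w: deleting all other letters yields xyxy... or yxyx...,
  i.e. the restricted word has no two equal consecutive letters.\<close>
definition alternate :: "'a list \<Rightarrow> 'a \<Rightarrow> 'a \<Rightarrow> bool" where
  "alternate w x y = successively (\<noteq>) (filter (\<lambda>z. z = x \<or> z = y) w)"

definition represents :: "'a graph \<Rightarrow> 'a list \<Rightarrow> bool" where
  "represents G w \<longleftrightarrow> set w = verts G \<and>
     (\<forall>x\<in>verts G. \<forall>y\<in>verts G. x \<noteq> y \<longrightarrow> (adj G x y \<longleftrightarrow> alternate w x y))"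

text \<open>Minimum length of a representing word (\<infinity> if G is not word-representable).\<close>
definition wrl :: "'a graph \<Rightarrow> enat" where
  "wrl G = (INF w \<in> {w. represents G w}. enat (length w))"

definition complete_graph :: "nat \<Rightarrow> nat graph" where
  "complete_graph n = ({0..<n}, \<lambda>x y. x \<noteq> y)"

definition cart_prod :: "'a graph \<Rightarrow> 'b graph \<Rightarrow> ('a \<times> 'b) graph" where
  "cart_prod G H = (verts G \<times> verts H,
     \<lambda>(u, v) (u', v'). (u = u' \<and> adj H v v') \<or> (v = v' \<and> adj G u u'))"

end

theory Submission
  imports Defs
begin

lemma filt2: "filter (\<lambda>k. k = p \<or> k = q) [0..<N] =
  (if p = q then (if p<N then [p] else []) else if p < q then (if p<N then [p] else []) @ (if q<N then [q] else [])
   else (if q<N then [q] else []) @ (if p<N then [p] else []))"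
  by (induction N) auto

lemma filt1: "filter (\<lambda>k. k = p) [0..<N] = (if p<N then [p] else [])"
  by (induction N) auto

definition W :: "nat \<Rightarrow> (nat \<times> nat) list" where
  "W m = map (\<lambda>k. (k div 2, k mod 2)) [0..<2*m] @ [(m,0)] @ map (\<lambda>i. (i,0)) [0..<m] @ [(m,1),(m,0)]
     @ map (\<lambda>k. (k div 2, 1 - k mod 2)) [0..<2*(m-1)]"

lemma segg: "c < 2 \<Longrightarrow> d < 2 \<Longrightarrow> filter (\<lambda>z. z = (i,c) \<or> z = (j,d)) (map (\<lambda>k. (k div 2, k mod 2)) [0..<N])
  = map (\<lambda>k. (k div 2, k mod 2)) (filter (\<lambda>k. k = 2*i+c \<or> k = 2*j+d) [0..<N])"
proof -
  assume "c < 2" "d < 2"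
  then have "(\<lambda>z. z = (i,c) \<or> z = (j,d)) \<circ> (\<lambda>k. (k div 2, k mod 2)) = (\<lambda>k. k = 2*i+c \<or> k = 2*j+d)"
    by (auto simp: fun_eq_iff)
  then show ?thesis by (simp add: filter_map)
qed

lemma segh: "c < 2 \<Longrightarrow> d < 2 \<Longrightarrow> filter (\<lambda>z. z = (i,c) \<or> z = (j,d)) (map (\<lambda>k. (k div 2, 1 - k mod 2)) [0..<N])
  = map (\<lambda>k. (k div 2, 1 - k mod 2)) (filter (\<lambda>k. k = 2*i+(1-c) \<or> k = 2*j+(1-d)) [0..<N])"
proof -
  assume "c < 2" "d < 2"
  have e: "(k div 2, 1 - k mod 2) = (i, c) \<longleftrightarrow> k = 2*i+(1-c)" if "c < 2" for k i c :: nat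
  proof -
    have "c = 0 \<or> c = 1" using that by auto
    then show ?thesis by (elim disjE) (simp_all, presburger+)
  qed
  have "(\<lambda>z. z = (i,c) \<or> z = (j,d)) \<circ> (\<lambda>k. (k div 2, 1 - k mod 2)) = (\<lambda>k. k = 2*i+(1-c) \<or> k = 2*j+(1-d))"
    using e[OF \<open>c<2\<close>] e[OF \<open>d<2\<close>] by (auto simp: fun_eq_iff simp del: prod.inject)
  then show ?thesis by (simp add: filter_map)
qed

lemma segp: "filter (\<lambda>z. z = (i,c) \<or> z = (j,d)) (map (\<lambda>k. (k, 0::nat)) [0..<N])
  = map (\<lambda>k. (k, 0)) (filter (\<lambda>k. (k = i \<and> c = 0) \<or> (k = j \<and> d = 0)) [0..<N])"
  by (simp add: filter_map o_def)

lemma alt_sym: "alternate w x y = alternate w y x"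
  unfolding alternate_def by (metis (no_types, lifting) filter_cong)

lemma key0: assumes "i < j" "j \<le> Suc k" "c < 2" "d < 2"
  shows "alternate (W (Suc k)) (i,c) (j,d) \<longleftrightarrow> c = d"
proof -
  have cd: "c = 0 \<or> c = 1" "d = 0 \<or> d = 1" using assms by auto
  consider "j < k" | "i < k" "j = k" | "i < k" "j = Suc k" | "i = k" "j = Suc k" using assms by linarith
  then show ?thesis
  proof cases
    case 1
    then show ?thesis using assms cd unfolding alternate_def W_def
      apply (simp only: filter_append segg segh segp)
      apply (elim disjE)
      apply (simp_all add: filt2 filt1)
      done
  next
    case 2
    then show ?thesis using assms cd unfolding alternate_def W_def
      apply (simp only: filter_append segg segh segp)
      apply (elim disjE)
      apply (simp_all add: filt2 filt1)
      done
  next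
    case 3
    then show ?thesis using assms cd unfolding alternate_def W_def
      apply (simp only: filter_append segg segh segp)
      apply (elim disjE)
      apply (simp_all add: filt2 filt1)
      done
  next
    case 4
    then show ?thesis using assms cd unfolding alternate_def W_def
      apply (simp only: filter_append segg segh segp)
      apply (elim disjE)
      apply (simp_all add: filt2 filt1)
      done
  qed
qed

lemma key1: assumes "i \<le> Suc k"
  shows "alternate (W (Suc k)) (i,0) (i,1)"
proof -
  consider "i < k" | "i = k" | "i = Suc k" using assms by linarith
  then show ?thesis
  proof cases
    case 1
    then show ?thesis unfolding alternate_def W_def
      apply (simp only: filter_append segg segh segp)
      apply (simp add: filt2 filt1)
      done
  next
    case 2
    then show ?thesis unfolding alternate_def W_def
      apply (simp only: filter_append segg segh segp)
      apply (simp add: filt2 filt1)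
      done
  next
    case 3
    then show ?thesis unfolding alternate_def W_def
      apply (simp only: filter_append segg segh segp)
      apply (simp add: filt2 filt1)
      done
  qed
qed
lemma setg: "set (map (\<lambda>k. (k div 2, k mod 2)) [0..<2*m]) = {0..<m} \<times> {0..<2}"
proof
  show "set (map (\<lambda>k. (k div 2, k mod 2)) [0..<2*m]) \<subseteq> {0..<m} \<times> {0..<2}" by auto
  show "{0..<m} \<times> {0..<2} \<subseteq> set (map (\<lambda>k. (k div 2, k mod 2)) [0..<2*m])"
  proof
    fix x assume "x \<in> {0..<m} \<times> {0..<(2::nat)}"
    then obtain i c where x: "x = (i,c)" "i < m" "c < 2" by auto
    then have "(i,c) = ((2*i+c) div 2, (2*i+c) mod 2)" "2*i+c < 2*m" by auto
    then show "x \<in> set (map (\<lambda>k. (k div 2, k mod 2)) [0..<2*m])" using x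
      by (metis (no_types, lifting) atLeastLessThan_iff image_eqI le0 set_map set_upt)
  qed
qed

lemma setW: "m \<ge> 1 \<Longrightarrow> set (W m) = {0..<Suc m} \<times> {0..<2}"
proof -
  assume m: "m \<ge> 1"
  have h: "set (map (\<lambda>k. (k div 2, 1 - k mod 2)) [0..<2*(m-1)]) \<subseteq> {0..<m} \<times> {0..<2}" by auto
  have p: "set (map (\<lambda>i. (i,0::nat)) [0..<m]) \<subseteq> {0..<m} \<times> {0..<2}" by auto
  have "{0..<Suc m} \<times> {0..<2::nat} = {0..<m} \<times> {0..<2} \<union> {(m,0),(m,1)}" by auto
  then show ?thesis using h p unfolding W_def set_append setg by auto
qed

lemma lenW: "length (W m) = 2*m + 3 + m + 2*(m-1)" by (simp add: W_def)

lemma repr: "represents (cart_prod (complete_graph (Suc (Suc k))) (complete_graph 2)) (W (Suc k))"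
  unfolding represents_def
proof (intro conjI ballI impI)
  show "set (W (Suc k)) = verts (cart_prod (complete_graph (Suc (Suc k))) (complete_graph 2))"
    using setW[of "Suc k"] by (simp add: cart_prod_def complete_graph_def verts_def)
next
  fix x y assume x: "x \<in> verts (cart_prod (complete_graph (Suc (Suc k))) (complete_graph 2))"
    and y: "y \<in> verts (cart_prod (complete_graph (Suc (Suc k))) (complete_graph 2))" and xy: "x \<noteq> y"
  obtain i c where xi: "x = (i,c)" "i \<le> Suc k" "c < 2" using x
    by (auto simp: cart_prod_def complete_graph_def verts_def)
  obtain j d where yj: "y = (j,d)" "j \<le> Suc k" "d < 2" using y
    by (auto simp: cart_prod_def complete_graph_def verts_def)
  have A: "adj (cart_prod (complete_graph (Suc (Suc k))) (complete_graph 2)) x y \<longleftrightarrow> (i = j \<and> c \<noteq> d) \<or> (c = d \<and> i \<noteq> j)"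
    using xi yj by (simp add: cart_prod_def complete_graph_def adj_def)
  consider "i < j" | "j < i" | "i = j" by linarith
  then show "adj (cart_prod (complete_graph (Suc (Suc k))) (complete_graph 2)) x y \<longleftrightarrow> alternate (W (Suc k)) x y"
  proof cases
    case 1
    then show ?thesis using A key0[of i j k c d] xi yj by auto
  next
    case 2
    have "alternate (W (Suc k)) x y = alternate (W (Suc k)) (j,d) (i,c)"
      using alt_sym xi yj by metis
    then show ?thesis using A key0[of j i k d c] xi yj 2 by auto
  next
    case 3
    then have "c \<noteq> d" using xi yj xy by auto
    then have "(c = 0 \<and> d = 1) \<or> (c = 1 \<and> d = 0)" using xi yj by auto
    moreover have "alternate (W (Suc k)) (i,1) (i,0)" using key1[of i k] xi alt_sym by metis
    ultimately show ?thesis using A key1[of i k] xi yj 3 by auto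
  qed
qed

theorem mainTheorem5:
  fixes n :: nat
  assumes "n \<ge> 2"
  shows "wrl (cart_prod (complete_graph n) (complete_graph 2)) \<le> enat (5 * n - 4)"
proof -
  obtain k where k: "n = Suc (Suc k)" using assms by (metis add_2_eq_Suc le_Suc_ex)
  have "wrl (cart_prod (complete_graph n) (complete_graph 2)) \<le> enat (length (W (Suc k)))"
    unfolding wrl_def using repr[of k] k by (auto intro: INF_lower)
  moreover have "length (W (Suc k)) = 5 * n - 4" using k by (simp add: lenW)
  ultimately show ?thesis by simp
qed

end
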